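(* Let $X$ and $Y$ be words in the free $\mathbb{C}$-algebra $\mathcal{A}$ on $L,R$. Then $X\sim Y$ if and only if there is a sequence of swaps between $X$ and $Y$.
   Context: $\mathcal{A}$ is the free associative $\mathbb{C}$-algebra on noncommuting generators $L,R$; words are finite products of these letters (including the empty word). A word is balanced if it contains equally many $L$'s and $R$'s. Let $S=\{FG-GF : F,G \text{ nonempty balanced words}\}$ and $\mathcal{J}$ the two-sided ideal generated by $S$; for words $X,Y$, $X\sim Y$ means $X-Y\in\mathcal{J}$. If $F,G$ are nonempty balanced words and $W_1,W_2$ are words, the words $W_1FGW_2$ and $W_1GFW_2$ are said to be related by a swap (of type $(F,G)$, which is the same as type $(G,F)$). A sequence of swaps between $X$ and $Y$ is a finite sequence of words $Z_1=X,Z_2,\dots,Z_k=Y$ such that $Z_i$ and $Z_{i+1}$ are related by a swap for each $1\le i\le k-1$. *)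

theory Defs
  imports Complex_Main
begin

datatype letter = L | R
type_synonym word = "letter list"

text \<open>The free associative C-algebra on L, R: finitely supported coefficient
  functions on words, with concatenation-convolution as product.\<close>
type_synonym elt = "word \<Rightarrow> complex"

definition freeAlg :: "elt set" where
  "freeAlg = {p. finite {w. p w \<noteq> 0}}"

definition amult :: "elt \<Rightarrow> elt \<Rightarrow> elt" where
  "amult p q = (\<lambda>w. \<Sum>i\<in>{0..length w}. p (take i w) * q (drop i w))"

definition wrd :: "word \<Rightarrow> elt" where
  "wrd u = (\<lambda>w. if w = u then 1 else 0)"

definition balanced :: "word \<Rightarrow> bool" where
  "balanced w \<longleftrightarrow> count_list w L = count_list w R"

definition Sgen :: "elt set" where
  "Sgen = {(\<lambda>w. wrd (F @ G) w - wrd (G @ F) w) | F G.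
            F \<noteq> [] \<and> G \<noteq> [] \<and> balanced F \<and> balanced G}"

inductive_set Jideal :: "elt set" where
  zero: "(\<lambda>w. 0) \<in> Jideal"
| gen: "s \<in> Sgen \<Longrightarrow> s \<in> Jideal"
| add: "a \<in> Jideal \<Longrightarrow> b \<in> Jideal \<Longrightarrow> (\<lambda>w. a w + b w) \<in> Jideal"
| lmul: "a \<in> Jideal \<Longrightarrow> x \<in> freeAlg \<Longrightarrow> amult x a \<in> Jideal"
| rmul: "a \<in> Jideal \<Longrightarrow> x \<in> freeAlg \<Longrightarrow> amult a x \<in> Jideal"

definition wequiv :: "word \<Rightarrow> word \<Rightarrow> bool" where
  "wequiv X Y \<longleftrightarrow> (\<lambda>w. wrd X w - wrd Y w) \<in> Jideal"

definition swap_rel :: "word \<Rightarrow> word \<Rightarrow> bool" where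
  "swap_rel X Y \<longleftrightarrow> (\<exists>W1 W2 F G. F \<noteq> [] \<and> G \<noteq> [] \<and> balanced F \<and> balanced G \<and>
      X = W1 @ F @ G @ W2 \<and> Y = W1 @ G @ F @ W2)"

definition swap_seq :: "word \<Rightarrow> word \<Rightarrow> bool" where
  "swap_seq X Y \<longleftrightarrow> (\<exists>Zs. Zs \<noteq> [] \<and> hd Zs = X \<and> last Zs = Y \<and>
      (\<forall>i. Suc i < length Zs \<longrightarrow> swap_rel (Zs ! i) (Zs ! Suc i)))"

end

theory Submission
  imports Defs
begin

lemma wrd_mult: "amult (wrd u) (wrd v) = wrd (u @ v)"
proof
  fix w
  have eq: "\<And>i. i \<in> {0..length w} \<Longrightarrow> wrd u (take i w) * wrd v (drop i w)
      = (if i = length u \<and> w = u @ v then 1 else 0)"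
  proof -
    fix i assume i: "i \<in> {0..length w}"
    have "(take i w = u \<and> drop i w = v) \<longleftrightarrow> (i = length u \<and> w = u @ v)"
    proof
      assume "take i w = u \<and> drop i w = v"
      then have tk: "take i w = u" and dr: "drop i w = v" by auto
      have "length u = i" using i tk[symmetric] by simp
      moreover have "w = u @ v" using tk dr append_take_drop_id[of i w] by simp
      ultimately show "i = length u \<and> w = u @ v" by simp
    next
      assume "i = length u \<and> w = u @ v" then show "take i w = u \<and> drop i w = v" by simp
    qed
    note iff = this
    show "wrd u (take i w) * wrd v (drop i w)
      = (if i = length u \<and> w = u @ v then 1 else 0)" unfolding wrd_def iff[symmetric]
      by (cases "take i w = u"; cases "drop i w = v"; simp)
  qed
  have "amult (wrd u) (wrd v) w = (\<Sum>i\<in>{0..length w}. (if i = length u \<and> w = u @ v then 1 else 0))"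
    unfolding amult_def using eq by (rule sum.cong[OF refl])
  also have "\<dots> = wrd (u @ v) w"
    by (cases "w = u @ v") (auto simp: wrd_def)
  finally show "amult (wrd u) (wrd v) w = wrd (u @ v) w" .
qed

lemma amult_diff_left: "amult (\<lambda>w. a w - b w) c = (\<lambda>w. amult a c w - amult b c w)"
  unfolding amult_def by (auto simp: left_diff_distrib sum_subtractf)

lemma amult_diff_right: "amult c (\<lambda>w. a w - b w) = (\<lambda>w. amult c a w - amult c b w)"
  unfolding amult_def by (auto simp: right_diff_distrib sum_subtractf)

lemma wrd_freeAlg: "wrd u \<in> freeAlg"
proof -
  have "{w. wrd u w \<noteq> 0} = {u}" by (auto simp: wrd_def)
  then show ?thesis unfolding freeAlg_def by simp
qed

lemma swap_wequiv: "swap_rel X Y \<Longrightarrow> wequiv X Y"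
proof -
  assume "swap_rel X Y"
  then obtain W1 W2 F G where h: "F \<noteq> []" "G \<noteq> []" "balanced F" "balanced G"
    "X = W1 @ F @ G @ W2" "Y = W1 @ G @ F @ W2" unfolding swap_rel_def by blast
  define s where "s = (\<lambda>w. wrd (F @ G) w - wrd (G @ F) w)"
  have "s \<in> Sgen" unfolding Sgen_def s_def using h by blast
  then have s: "s \<in> Jideal" by (rule Jideal.gen)
  have "amult (wrd W1) (amult s (wrd W2)) \<in> Jideal"
    by (intro Jideal.lmul Jideal.rmul s wrd_freeAlg)
  moreover have "amult (wrd W1) (amult s (wrd W2)) = (\<lambda>w. wrd X w - wrd Y w)"
    unfolding s_def amult_diff_left amult_diff_right
    by (simp add: wrd_mult h)
  ultimately show ?thesis unfolding wequiv_def by simp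
qed

lemma wequiv_refl: "wequiv X X"
  unfolding wequiv_def using Jideal.zero by simp

lemma wequiv_trans: "wequiv X Y \<Longrightarrow> wequiv Y Z \<Longrightarrow> wequiv X Z"
  unfolding wequiv_def
proof -
  assume a: "(\<lambda>w. wrd X w - wrd Y w) \<in> Jideal" "(\<lambda>w. wrd Y w - wrd Z w) \<in> Jideal"
  have "(\<lambda>w. (wrd X w - wrd Y w) + (wrd Y w - wrd Z w)) \<in> Jideal"
    using Jideal.add[OF a] by simp
  then show "(\<lambda>w. wrd X w - wrd Z w) \<in> Jideal" by simp
qed

lemma chain_wequiv:
  "Zs \<noteq> [] \<Longrightarrow> (\<forall>i. Suc i < length Zs \<longrightarrow> swap_rel (Zs ! i) (Zs ! Suc i))
    \<Longrightarrow> wequiv (hd Zs) (last Zs)"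
proof (induction Zs)
  case Nil then show ?case by simp
next
  case (Cons z Zs)
  show ?case
  proof (cases "Zs = []")
    case True then show ?thesis by (simp add: wequiv_refl)
  next
    case False
    have "swap_rel z (hd Zs)" using Cons.prems(2)[rule_format, of 0] False
      by (simp add: hd_conv_nth)
    moreover have "wequiv (hd Zs) (last Zs)"
    proof (rule Cons.IH[OF False], intro allI impI)
      fix i assume "Suc i < length Zs"
      then show "swap_rel (Zs ! i) (Zs ! Suc i)"
        using Cons.prems(2)[rule_format, of "Suc i"] by simp
    qed
    ultimately show ?thesis using False by (auto intro: wequiv_trans swap_wequiv)
  qed
qed

definition closedD :: "word set \<Rightarrow> bool" where
  "closedD D \<longleftrightarrow> (\<forall>v w. v \<in> D \<longrightarrow> swap_rel v w \<longrightarrow> w \<in> D)"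

definition Phi :: "elt \<Rightarrow> bool" where
  "Phi p \<longleftrightarrow> (\<forall>D. finite D \<longrightarrow> closedD D \<longrightarrow> sum p D = 0)"

lemma swap_rel_sym: "swap_rel v w \<Longrightarrow> swap_rel w v"
  unfolding swap_rel_def by blast

lemma swap_rel_cons: "swap_rel v w \<Longrightarrow> swap_rel (u @ v) (u @ w)"
  unfolding swap_rel_def by (metis append.assoc)

lemma swap_rel_snoc: "swap_rel v w \<Longrightarrow> swap_rel (v @ u) (w @ u)"
  unfolding swap_rel_def by (metis append.assoc)

lemma sum_pairs:
  assumes fD: "finite D"
  defines "P \<equiv> {(u, w). u @ w \<in> D}"
  shows "(\<Sum>v\<in>D. \<Sum>i\<in>{0..length v}. f (take i v) (drop i v)) = (\<Sum>p\<in>P. f (fst p) (snd p))"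
    and "finite P"
proof -
  let ?m = "\<lambda>(v, i). (take i v, drop i v)"
  let ?S = "Sigma D (\<lambda>v. {0..length v})"
  have img: "P = ?m ` ?S"
  proof
    show "P \<subseteq> ?m ` ?S"
    proof
      fix p assume "p \<in> P"
      then obtain u w where p: "p = (u, w)" "u @ w \<in> D" unfolding P_def by auto
      then have "(u @ w, length u) \<in> ?S" by auto
      moreover have "?m (u @ w, length u) = p" using p by simp
      ultimately show "p \<in> ?m ` ?S" by (rule rev_image_eqI[OF _ sym])
    qed
  next
    show "?m ` ?S \<subseteq> P" unfolding P_def by auto
  qed
  have inj: "inj_on ?m ?S"
  proof (rule inj_onI)
    fix a b assume a: "a \<in> ?S" and b: "b \<in> ?S" and e: "?m a = ?m b"
    obtain v i where av: "a = (v, i)" by (cases a)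
    obtain v' j where bv: "b = (v', j)" by (cases b)
    have 1: "take i v = take j v'" "drop i v = drop j v'" using e av bv by auto
    then have "v = v'" by (metis append_take_drop_id)
    moreover have "i = j"
    proof -
      have "i \<le> length v" "j \<le> length v'" using a b av bv by auto
      then have "length (take i v) = i" "length (take j v') = j" by simp_all
      then show "i = j" using 1(1) by simp
    qed
    ultimately show "a = b" using av bv by simp
  qed
  have fS: "finite ?S" using fD by auto
  show "finite P" using img fS by simp
  have "(\<Sum>v\<in>D. \<Sum>i\<in>{0..length v}. f (take i v) (drop i v)) = (\<Sum>(v,i)\<in>?S. f (take i v) (drop i v))"
    by (rule sum.Sigma) (use fD in auto)
  also have "\<dots> = (\<Sum>p\<in>?m ` ?S. f (fst p) (snd p))"
    by (subst sum.reindex[OF inj]) (auto intro!: sum.cong)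
  finally show "(\<Sum>v\<in>D. \<Sum>i\<in>{0..length v}. f (take i v) (drop i v)) = (\<Sum>p\<in>P. f (fst p) (snd p))"
    using img by simp
qed

lemma pairs_split:
  assumes fP: "finite P" and PD: "P = {(u, w). u @ w \<in> D}"
  shows "(\<Sum>p\<in>P. g (fst p) (snd p)) = (\<Sum>u\<in>fst ` P. \<Sum>w\<in>{w\<in>snd ` P. u @ w \<in> D}. g u w)"
proof -
  have "P = Sigma (fst ` P) (\<lambda>u. {w\<in>snd ` P. u @ w \<in> D})"
    using PD by force
  then have "(\<Sum>p\<in>P. g (fst p) (snd p)) = (\<Sum>(u,w)\<in>Sigma (fst ` P) (\<lambda>u. {w\<in>snd ` P. u @ w \<in> D}). g u w)"
    by (simp add: case_prod_beta)
  also have "\<dots> = (\<Sum>u\<in>fst ` P. \<Sum>w\<in>{w\<in>snd ` P. u @ w \<in> D}. g u w)"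
    by (rule sum.Sigma[symmetric]) (use fP in auto)
  finally show ?thesis .
qed

lemma Phi_Jideal: "p \<in> Jideal \<Longrightarrow> Phi p"
proof (induction rule: Jideal.induct)
  case zero then show ?case unfolding Phi_def by simp
next
  case (gen s)
  then obtain F G where s: "s = (\<lambda>w. wrd (F @ G) w - wrd (G @ F) w)"
    "F \<noteq> []" "G \<noteq> []" "balanced F" "balanced G" unfolding Sgen_def by blast
  have sw: "swap_rel (F @ G) (G @ F)" unfolding swap_rel_def using s
    by (metis append.right_neutral append_Nil)
  show ?case unfolding Phi_def
  proof (intro allI impI)
    fix D assume fD: "finite D" and cD: "closedD D"
    have iff: "F @ G \<in> D \<longleftrightarrow> G @ F \<in> D" using cD sw swap_rel_sym unfolding closedD_def by blast
    have "sum s D = sum (wrd (F @ G)) D - sum (wrd (G @ F)) D"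
      unfolding s by (simp add: sum_subtractf)
    also have "\<dots> = 0" using iff fD unfolding wrd_def by (simp add: sum.delta')
    finally show "sum s D = 0" .
  qed
next
  case (add a b)
  then show ?case unfolding Phi_def by (simp add: sum.distrib)
next
  case (lmul a x)
  show ?case unfolding Phi_def
  proof (intro allI impI)
    fix D assume fD: "finite D" and cD: "closedD D"
    define P where "P = {(u, w). u @ w \<in> D}"
    have fP: "finite P" using sum_pairs(2)[OF fD] P_def by simp
    have "sum (amult x a) D = (\<Sum>p\<in>P. x (fst p) * a (snd p))"
      unfolding amult_def using sum_pairs(1)[OF fD, of "\<lambda>u w. x u * a w"] P_def by simp
    also have "\<dots> = (\<Sum>u\<in>fst ` P. \<Sum>w\<in>{w\<in>snd ` P. u @ w \<in> D}. x u * a w)"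
      by (rule pairs_split[OF fP P_def])
    also have "\<dots> = (\<Sum>u\<in>fst ` P. x u * (\<Sum>w\<in>{w\<in>snd ` P. u @ w \<in> D}. a w))"
      by (simp add: sum_distrib_left)
    also have "\<dots> = 0"
    proof (rule sum.neutral, rule ballI)
      fix u assume "u \<in> fst ` P"
      have fin: "finite {w\<in>snd ` P. u @ w \<in> D}" using fP by simp
      have cl: "closedD {w\<in>snd ` P. u @ w \<in> D}" unfolding closedD_def
      proof (intro allI impI)
        fix v w assume v: "v \<in> {w\<in>snd ` P. u @ w \<in> D}" and sr: "swap_rel v w"
        then have "u @ w \<in> D" using cD swap_rel_cons unfolding closedD_def by blast
        then have "(u, w) \<in> P" unfolding P_def by simp
        then have "w \<in> snd ` P" by force
        then show "w \<in> {w\<in>snd ` P. u @ w \<in> D}" using \<open>u @ w \<in> D\<close> by simp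
      qed
      show "x u * (\<Sum>w\<in>{w\<in>snd ` P. u @ w \<in> D}. a w) = 0"
        using lmul.IH fin cl unfolding Phi_def by simp
    qed
    finally show "sum (amult x a) D = 0" .
  qed
next
  case (rmul a x)
  show ?case unfolding Phi_def
  proof (intro allI impI)
    fix D assume fD: "finite D" and cD: "closedD D"
    define P where "P = {(u, w). u @ w \<in> D}"
    have fP: "finite P" using sum_pairs(2)[OF fD] P_def by simp
    have "sum (amult a x) D = (\<Sum>p\<in>P. a (fst p) * x (snd p))"
      unfolding amult_def using sum_pairs(1)[OF fD, of "\<lambda>u w. a u * x w"] P_def by simp
    also have "\<dots> = (\<Sum>u\<in>fst ` P. \<Sum>w\<in>{w\<in>snd ` P. u @ w \<in> D}. a u * x w)"
      by (rule pairs_split[OF fP P_def])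
    also have "\<dots> = (\<Sum>w\<in>snd ` P. \<Sum>u\<in>{u\<in>fst ` P. u @ w \<in> D}. a u * x w)"
      by (rule sum.swap_restrict) (use fP in auto)
    also have "\<dots> = (\<Sum>w\<in>snd ` P. x w * (\<Sum>u\<in>{u\<in>fst ` P. u @ w \<in> D}. a u))"
      by (simp add: sum_distrib_left mult.commute)
    also have "\<dots> = 0"
    proof (rule sum.neutral, rule ballI)
      fix w assume "w \<in> snd ` P"
      have fin: "finite {u\<in>fst ` P. u @ w \<in> D}" using fP by simp
      have cl: "closedD {u\<in>fst ` P. u @ w \<in> D}" unfolding closedD_def
      proof (intro allI impI)
        fix v u assume v: "v \<in> {u\<in>fst ` P. u @ w \<in> D}" and sr: "swap_rel v u"
        then have "u @ w \<in> D" using cD swap_rel_snoc unfolding closedD_def by blast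
        then have "(u, w) \<in> P" unfolding P_def by simp
        then have "u \<in> fst ` P" by force
        then show "u \<in> {u\<in>fst ` P. u @ w \<in> D}" using \<open>u @ w \<in> D\<close> by simp
      qed
      show "x w * (\<Sum>u\<in>{u\<in>fst ` P. u @ w \<in> D}. a u) = 0"
        using rmul.IH fin cl unfolding Phi_def by simp
    qed
    finally show "sum (amult a x) D = 0" .
  qed
qed

lemma swap_rel_length: "swap_rel v w \<Longrightarrow> length v = length w"
  unfolding swap_rel_def by auto

lemma chain_length:
  "Zs \<noteq> [] \<Longrightarrow> (\<forall>i. Suc i < length Zs \<longrightarrow> swap_rel (Zs ! i) (Zs ! Suc i))
    \<Longrightarrow> length (last Zs) = length (hd Zs)"
proof (induction Zs)
  case Nil then show ?case by simp
next
  case (Cons z Zs)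
  show ?case
  proof (cases "Zs = []")
    case True then show ?thesis by simp
  next
    case False
    have "swap_rel z (hd Zs)" using Cons.prems(2)[rule_format, of 0] False
      by (simp add: hd_conv_nth)
    moreover have "length (last Zs) = length (hd Zs)"
    proof (rule Cons.IH[OF False], intro allI impI)
      fix i assume "Suc i < length Zs"
      then show "swap_rel (Zs ! i) (Zs ! Suc i)"
        using Cons.prems(2)[rule_format, of "Suc i"] by simp
    qed
    ultimately show ?thesis using False swap_rel_length by simp
  qed
qed

lemma swap_seq_length: "swap_seq X Y \<Longrightarrow> length Y = length X"
  unfolding swap_seq_def using chain_length by blast

lemma swap_seq_refl: "swap_seq X X"
  unfolding swap_seq_def by (rule exI[of _ "[X]"]) simp

lemma swap_seq_step: "swap_seq X Y \<Longrightarrow> swap_rel Y Z \<Longrightarrow> swap_seq X Z"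
proof -
  assume a: "swap_seq X Y" and b: "swap_rel Y Z"
  then obtain Zs where z: "Zs \<noteq> []" "hd Zs = X" "last Zs = Y"
      "\<forall>i. Suc i < length Zs \<longrightarrow> swap_rel (Zs ! i) (Zs ! Suc i)"
    unfolding swap_seq_def by blast
  have "\<forall>i. Suc i < length (Zs @ [Z]) \<longrightarrow> swap_rel ((Zs @ [Z]) ! i) ((Zs @ [Z]) ! Suc i)"
  proof (intro allI impI)
    fix i assume i: "Suc i < length (Zs @ [Z])"
    show "swap_rel ((Zs @ [Z]) ! i) ((Zs @ [Z]) ! Suc i)"
    proof (cases "Suc i < length Zs")
      case True then show ?thesis using z(4) by (simp add: nth_append)
    next
      case False
      then have "Suc i = length Zs" using i by simp
      then have "i = length Zs - 1" by simp
      then have "Zs ! i = Y" using z(1,3) by (simp add: last_conv_nth)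
      then show ?thesis using b \<open>Suc i = length Zs\<close> by (simp add: nth_append)
    qed
  qed
  then show ?thesis unfolding swap_seq_def using z
    by (intro exI[of _ "Zs @ [Z]"]) auto
qed

lemma finite_letter: "finite (UNIV :: letter set)"
proof -
  have "(UNIV :: letter set) = {L, R}" by (auto intro: letter.exhaust)
  then show ?thesis by (metis finite.emptyI finite.insertI)
qed

theorem proposition3p2:
  fixes X Y :: word
  shows "wequiv X Y \<longleftrightarrow> swap_seq X Y"
proof
  assume "swap_seq X Y"
  then show "wequiv X Y" unfolding swap_seq_def using chain_wequiv by blast
next
  assume "wequiv X Y"
  then have "Phi (\<lambda>w. wrd X w - wrd Y w)" unfolding wequiv_def by (rule Phi_Jideal)
  define D where "D = {Z. swap_seq X Z}"
  have "D \<subseteq> {xs. set xs \<subseteq> UNIV \<and> length xs = length X}"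
    unfolding D_def using swap_seq_length by auto
  moreover have "finite {xs :: word. set xs \<subseteq> UNIV \<and> length xs = length X}"
    by (rule finite_lists_length_eq[OF finite_letter])
  ultimately have fD: "finite D" by (rule finite_subset)
  have cD: "closedD D" unfolding closedD_def D_def using swap_seq_step by blast
  have XD: "X \<in> D" unfolding D_def by (simp add: swap_seq_refl)
  have "(\<Sum>w\<in>D. wrd X w - wrd Y w) = 0" using \<open>Phi _\<close> fD cD unfolding Phi_def by blast
  then have "sum (wrd X) D - sum (wrd Y) D = 0" by (simp add: sum_subtractf)
  then have "Y \<in> D" using XD fD unfolding wrd_def by (simp add: sum.delta' split: if_splits)
  then show "swap_seq X Y" unfolding D_def by simp
qed

end
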